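(* Let $u(x,y):=\frac13(y^3-x^3)$ for $(x,y)\in(-1,1)^2$, and let $X$ be the gradient flow $X'(t,x,y)=\nabla u(X(t,x,y))$, $X(0,x,y)=(x,y)$. i) In the open set $\Omega=(0,1)\times(-1,0)$ (resp. $(-1,0)\times(0,1)$), the point $(0,0)$ is positively (resp. negatively) stable for this flow. However, $\nabla u$ is not isotropically realizable in $\Omega$ (i.e. there is no solution of $\mathrm{div}(\sigma\nabla u)=0$ in $\Omega$) with any positive conductivity $\sigma\in C^1(\Omega)\cap L^\infty(\Omega)$. ii) In the open set $\Omega=(0,1)^2$ or $(-1,0)^2$, the point $(0,0)$ is not stable. Moreover, $\nabla u$ is isotropically realizable in $\Omega$ with some positive conductivity $\sigma_0\in C^1(\Omega)\cap L^\infty(\Omega)$. However, $\nabla u$ is not realizable in $\Omega$ with any positive conductivity $\sigma\in C^1(\Omega)\cap L^\infty(\Omega)$ such that $\sigma^{-1}\in L^\infty(\Omega)$.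
   Context: $(0,0)$ is the unique critical point of $u$ in $(-1,1)^2$ and $\nabla^2u(0,0)=0$ (non-hyperbolic). A critical point $x_*$ is positively (resp. negatively) stable in the considered region if there are a compact neighborhood $K_*$ of $x_*$ containing no other critical point and a neighborhood $Q_*\subset\mathrm{int}(K_* )$ of $x_*$ such that $X(t,x)\in K_*$ for all $x\in Q_*$ and all $t\ge0$ (resp. all $t\le0$). *)

theory Defs
  imports "HOL-Analysis.Analysis"
begin

definition u :: "real \<times> real \<Rightarrow> real" where
  "u p = ((snd p)^3 - (fst p)^3) / 3"

definition grad_u :: "real \<times> real \<Rightarrow> real \<times> real" where
  "grad_u p = (- ((fst p)^2), ((snd p)^2))"

lemma grad_u_is_gradient:
  "(u has_derivative (\<lambda>h. grad_u p \<bullet> h)) (at p)"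
proof -
  have "(u has_derivative (\<lambda>h. ((3 * (snd p)^2 * snd h) - (3 * (fst p)^2 * fst h)) / 3)) (at p)"
    unfolding u_def
    by (auto intro!: derivative_eq_intros simp: field_simps)
  moreover have "(\<lambda>h. ((3 * (snd p)^2 * snd h) - (3 * (fst p)^2 * fst h)) / 3) = (\<lambda>h. grad_u p \<bullet> h)"
    by (auto simp: grad_u_def inner_prod_def field_simps fun_eq_iff)
  ultimately show ?thesis by simp
qed

definition square :: "(real \<times> real) set" where
  "square = {-1<..<1} \<times> {-1<..<1}"

text \<open>Since F is smooth, trajectories are unique, so the existence of
  such a solution is the same as the flow X(t,x) being in K for all t \<ge> 0.\<close>
definition pos_stable ::
  "(real \<times> real) set \<Rightarrow> (real \<times> real \<Rightarrow> real \<times> real) \<Rightarrow> real \<times> real \<Rightarrow> bool" where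
  "pos_stable \<Omega> F z \<longleftrightarrow>
     (\<exists>K. compact K \<and> K \<subseteq> closure \<Omega> \<inter> square \<and>
        (\<exists>U. open U \<and> z \<in> U \<and> U \<inter> \<Omega> \<subseteq> K) \<and>
        (\<forall>q\<in>K. F q = 0 \<longrightarrow> q = z) \<and>
        (\<exists>V. open V \<and> z \<in> V \<and> V \<inter> \<Omega> \<subseteq> K \<and>
           (\<forall>x\<in>V \<inter> \<Omega>. \<exists>\<gamma>. \<gamma> 0 = x \<and>
              (\<forall>t\<ge>0. (\<gamma> has_vector_derivative F (\<gamma> t)) (at t within {0..}) \<and> \<gamma> t \<in> K))))"

definition neg_stable ::
  "(real \<times> real) set \<Rightarrow> (real \<times> real \<Rightarrow> real \<times> real) \<Rightarrow> real \<times> real \<Rightarrow> bool" where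
  "neg_stable \<Omega> F z \<longleftrightarrow>
     (\<exists>K. compact K \<and> K \<subseteq> closure \<Omega> \<inter> square \<and>
        (\<exists>U. open U \<and> z \<in> U \<and> U \<inter> \<Omega> \<subseteq> K) \<and>
        (\<forall>q\<in>K. F q = 0 \<longrightarrow> q = z) \<and>
        (\<exists>V. open V \<and> z \<in> V \<and> V \<inter> \<Omega> \<subseteq> K \<and>
           (\<forall>x\<in>V \<inter> \<Omega>. \<exists>\<gamma>. \<gamma> 0 = x \<and>
              (\<forall>t\<le>0. (\<gamma> has_vector_derivative F (\<gamma> t)) (at t within {..0}) \<and> \<gamma> t \<in> K))))"

text \<open>sigma is in C^1(\<Omega>) (continuous partial derivatives), positive, and in L^\<infinity>(\<Omega>)
  (for a continuous function on an open set this is boundedness).\<close>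
definition pos_C1_Linf :: "(real \<times> real) set \<Rightarrow> (real \<times> real \<Rightarrow> real) \<Rightarrow> bool" where
  "pos_C1_Linf \<Omega> \<sigma> \<longleftrightarrow>
     (\<forall>p\<in>\<Omega>. \<sigma> p > 0) \<and>
     (\<exists>\<sigma>x \<sigma>y. continuous_on \<Omega> \<sigma>x \<and> continuous_on \<Omega> \<sigma>y \<and>
        (\<forall>p\<in>\<Omega>. (\<sigma> has_derivative (\<lambda>h. \<sigma>x p * fst h + \<sigma>y p * snd h)) (at p))) \<and>
     bounded (\<sigma> ` \<Omega>)"

definition div_free :: "(real \<times> real) set \<Rightarrow> (real \<times> real \<Rightarrow> real \<times> real) \<Rightarrow> bool" where
  "div_free \<Omega> w \<longleftrightarrow>
     (\<forall>p\<in>\<Omega>. \<exists>D. (w has_derivative D) (at p) \<and> fst (D (1,0)) + snd (D (0,1)) = 0)"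

definition realizable_with :: "(real \<times> real) set \<Rightarrow> (real \<times> real \<Rightarrow> real) \<Rightarrow> bool" where
  "realizable_with \<Omega> \<sigma> \<longleftrightarrow> div_free \<Omega> (\<lambda>p. \<sigma> p *\<^sub>R grad_u p)"

end

theory Submission
  imports Defs
begin


lemma grow_fwd:
  fixes k :: "real \<Rightarrow> real"
  assumes k0: "k 0 > 0" and d: "\<And>t. t \<ge> 0 \<Longrightarrow> (k has_real_derivative (k t)^2) (at t within {0..})"
  shows "\<exists>t\<ge>0. k t \<ge> 1"
proof -
  have dd: "\<And>x. 0 \<le> x \<Longrightarrow> x \<le> T \<Longrightarrow> (k has_derivative (\<lambda>h. (k x)^2 * h)) (at x within {0..T})" for T
    using d by (metis atLeast_iff atLeastAtMost_iff has_field_derivative_def has_field_derivative_subset subsetI)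
  have mono: "k t \<ge> k 0" if t0: "t \<ge> 0" for t
  proof -
    obtain x where "k t - k 0 = (k x)^2 * (t - 0)" using mvt_very_simple[of _ _ k "\<lambda>x h. (k x)^2 * h", OF t0 dd] by blast
    moreover have "(k x)^2 * (t - 0) \<ge> 0" using t0 by simp
    ultimately show ?thesis by linarith
  qed
  define T where "T = 1 / (k 0)^2"
  have T0: "T \<ge> 0" unfolding T_def by simp
  obtain x where x: "x \<in> {0..T}" "k T - k 0 = (k x)^2 * (T - 0)" using mvt_very_simple[of _ _ k "\<lambda>x h. (k x)^2 * h", OF T0 dd] by blast
  have "(k x)^2 \<ge> (k 0)^2" using mono[of x] x(1) k0 by (simp add: power_mono)
  then have "(k x)^2 * T \<ge> (k 0)^2 * T" using T0 by (simp add: mult_right_mono)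
  also have "(k 0)^2 * T = 1" unfolding T_def using k0 by simp
  finally have "k T \<ge> 1 + k 0" using x by simp
  then show ?thesis using T0 k0 by (intro exI[of _ T]) auto
qed

lemma grow_bwd:
  fixes k :: "real \<Rightarrow> real"
  assumes k0: "k 0 > 0" and d: "\<And>t. t \<le> 0 \<Longrightarrow> (k has_real_derivative (-((k t)^2))) (at t within {..0})"
  shows "\<exists>t\<le>0. k t \<ge> 1"
proof -
  have dd: "\<And>x. T \<le> x \<Longrightarrow> x \<le> 0 \<Longrightarrow> (k has_derivative (\<lambda>h. (-((k x)^2)) * h)) (at x within {T..0})" for T
    using d by (metis atMost_iff atLeastAtMost_iff has_field_derivative_def has_field_derivative_subset subsetI)
  have mono: "k t \<ge> k 0" if t0: "t \<le> 0" for t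
  proof -
    obtain x where "k 0 - k t = (-((k x)^2)) * (0 - t)" using mvt_very_simple[of _ _ k "\<lambda>x h. (-((k x)^2)) * h", OF t0 dd] by blast
    moreover have "(-((k x)^2)) * (0 - t) \<le> 0" using t0 by (simp add: mult_nonneg_nonpos)
    ultimately show ?thesis by linarith
  qed
  define T where "T = - 1 / (k 0)^2"
  have T0: "T \<le> 0" unfolding T_def by simp
  obtain x where x: "x \<in> {T..0}" "k 0 - k T = (-((k x)^2)) * (0 - T)" using mvt_very_simple[of _ _ k "\<lambda>x h. (-((k x)^2)) * h", OF T0 dd] by blast
  have "(k x)^2 \<ge> (k 0)^2" using mono[of x] x(1) k0 by (simp add: power_mono)
  then have "(k x)^2 * (-T) \<ge> (k 0)^2 * (-T)" using T0 by (intro mult_right_mono) auto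
  also have "(k 0)^2 * (-T) = 1" unfolding T_def using k0 by simp
  finally have "k T \<ge> 1 + k 0" using x by simp
  then show ?thesis using T0 k0 by (intro exI[of _ T]) auto
qed


lemma grad_u_deriv:
  "(grad_u has_derivative (\<lambda>h. (- (2 * fst p * fst h), 2 * snd p * snd h))) (at p)"
  unfolding grad_u_def
  by (auto intro!: derivative_eq_intros simp: fun_eq_iff)

lemma trace_identity:
  assumes ds: "(\<sigma> has_derivative (\<lambda>h. sx * fst h + sy * snd h)) (at p)"
    and dv: "((\<lambda>q. \<sigma> q *\<^sub>R grad_u q) has_derivative D) (at p)"
    and tr: "fst (D (1,0)) + snd (D (0,1)) = 0"
  shows "sx * (-((fst p)^2)) + sy * (snd p)^2 = 2 * \<sigma> p * (fst p - snd p)"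
proof -
  have "((\<lambda>q. \<sigma> q *\<^sub>R grad_u q) has_derivative
      (\<lambda>h. \<sigma> p *\<^sub>R (- (2 * fst p * fst h), 2 * snd p * snd h) + (sx * fst h + sy * snd h) *\<^sub>R grad_u p)) (at p)"
    by (rule has_derivative_scaleR[OF ds grad_u_deriv])
  then have "D = (\<lambda>h. \<sigma> p *\<^sub>R (- (2 * fst p * fst h), 2 * snd p * snd h) + (sx * fst h + sy * snd h) *\<^sub>R grad_u p)"
    using dv has_derivative_unique by blast
  with tr show ?thesis by (simp add: grad_u_def algebra_simps)
qed

definition gam :: "real \<Rightarrow> real \<Rightarrow> real \<Rightarrow> real \<times> real" where
  "gam x0 y0 t = (x0 / (1 + x0 * t), y0 / (1 - y0 * t))"

lemma gam_deriv:
  assumes "1 + x0 * t \<noteq> 0" "1 - y0 * t \<noteq> 0"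
  shows "(gam x0 y0 has_vector_derivative grad_u (gam x0 y0 t)) (at t)"
proof -
  have 1: "((\<lambda>t. x0 / (1 + x0 * t)) has_real_derivative (-((x0 / (1 + x0 * t))^2))) (at t)"
    using assms(1) by (auto intro!: derivative_eq_intros simp: field_simps power2_eq_square)
  have 2: "((\<lambda>t. y0 / (1 - y0 * t)) has_real_derivative ((y0 / (1 - y0 * t))^2)) (at t)"
    using assms(2) by (auto intro!: derivative_eq_intros simp: field_simps power2_eq_square)
  show ?thesis unfolding gam_def[abs_def] grad_u_def
    using has_vector_derivative_Pair[OF 1[unfolded has_real_derivative_iff_has_vector_derivative]
        2[unfolded has_real_derivative_iff_has_vector_derivative]]
    by simp
qed

lemma flow_inv:
  assumes ds: "\<And>q. q \<in> \<Omega> \<Longrightarrow> (\<sigma> has_derivative (\<lambda>h. sx q * fst h + sy q * snd h)) (at q)"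
    and dv: "div_free \<Omega> (\<lambda>q. \<sigma> q *\<^sub>R grad_u q)"
    and nz: "\<And>s. s \<in> {a..b} \<Longrightarrow> 1 + x0 * s \<noteq> 0 \<and> 1 - y0 * s \<noteq> 0"
    and inO: "\<And>s. s \<in> {a..b} \<Longrightarrow> gam x0 y0 s \<in> \<Omega>"
    and ab: "a \<le> 0" "0 \<le> b" and t: "t \<in> {a..b}"
  shows "\<sigma> (gam x0 y0 t) = \<sigma> (x0, y0) * ((1 + x0 * t)^2 * (1 - y0 * t)^2)"
proof -
  define Dn where "Dn s = (1 + x0 * s)^2 * (1 - y0 * s)^2" for s
  define h where "h s = \<sigma> (gam x0 y0 s) / Dn s" for s
  have key: "(h has_real_derivative 0) (at s)" if s: "s \<in> {a..b}" for s
  proof -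
    define q where "q = gam x0 y0 s"
    have qO: "q \<in> \<Omega>" using inO[OF s] q_def by simp
    obtain D where D: "((\<lambda>q. \<sigma> q *\<^sub>R grad_u q) has_derivative D) (at q)" "fst (D (1,0)) + snd (D (0,1)) = 0"
      using dv qO unfolding div_free_def by blast
    have tr: "sx q * (-((fst q)^2)) + sy q * (snd q)^2 = 2 * \<sigma> q * (fst q - snd q)"
      by (rule trace_identity[OF ds[OF qO] D])
    have n1: "1 + x0 * s \<noteq> 0" and n2: "1 - y0 * s \<noteq> 0" using nz[OF s] by auto
    have comp: "((\<lambda>s. \<sigma> (gam x0 y0 s)) has_derivative
        (\<lambda>h. sx q * fst (h *\<^sub>R grad_u q) + sy q * snd (h *\<^sub>R grad_u q))) (at s)"
      using has_derivative_compose[OF gam_deriv[OF n1 n2, unfolded has_vector_derivative_def] ds[OF qO, unfolded q_def]]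
      unfolding q_def by simp
    have eqf: "(\<lambda>h. sx q * fst (h *\<^sub>R grad_u q) + sy q * snd (h *\<^sub>R grad_u q)) = (*) (2 * \<sigma> q * (fst q - snd q))"
    proof (rule ext)
      fix h
      have "sx q * fst (h *\<^sub>R grad_u q) + sy q * snd (h *\<^sub>R grad_u q) = h * (sx q * (-((fst q)^2)) + sy q * (snd q)^2)"
        by (simp add: grad_u_def algebra_simps)
      then show "sx q * fst (h *\<^sub>R grad_u q) + sy q * snd (h *\<^sub>R grad_u q) = (2 * \<sigma> q * (fst q - snd q)) * h"
        using tr by simp
    qed
    have d1: "((\<lambda>s. \<sigma> (gam x0 y0 s)) has_real_derivative (2 * \<sigma> q * (fst q - snd q))) (at s)"
      using comp unfolding eqf has_field_derivative_def .
    have d2: "(Dn has_real_derivative (2 * Dn s * (fst q - snd q))) (at s)"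
    proof -
      have "(Dn has_real_derivative (2 * (1 + x0 * s) * x0 * (1 - y0 * s)^2 - (1 + x0 * s)^2 * (2 * (1 - y0 * s) * y0))) (at s)"
        unfolding Dn_def[abs_def] by (auto intro!: derivative_eq_intros simp: algebra_simps)
      moreover have "2 * (1 + x0 * s) * x0 * (1 - y0 * s)^2 - (1 + x0 * s)^2 * (2 * (1 - y0 * s) * y0) = 2 * Dn s * (fst q - snd q)"
      proof -
        have e1: "Dn s * (x0 / (1 + x0 * s)) = (1 + x0 * s) * x0 * (1 - y0 * s)^2"
          unfolding Dn_def using n1 by (simp add: power2_eq_square)
        have e2: "Dn s * (y0 / (1 - y0 * s)) = (1 + x0 * s)^2 * ((1 - y0 * s) * y0)"
          unfolding Dn_def using n2 by (simp add: power2_eq_square)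
        have "2 * Dn s * (fst q - snd q) = 2 * (Dn s * (x0 / (1 + x0 * s))) - 2 * (Dn s * (y0 / (1 - y0 * s)))"
          unfolding q_def gam_def by (simp add: algebra_simps)
        also have "\<dots> = 2 * ((1 + x0 * s) * x0 * (1 - y0 * s)^2) - 2 * ((1 + x0 * s)^2 * ((1 - y0 * s) * y0))"
          unfolding e1 e2 ..
        finally show ?thesis by (simp add: algebra_simps)
      qed
      ultimately show ?thesis by simp
    qed
    have Dnz: "Dn s \<noteq> 0" unfolding Dn_def using n1 n2 by simp
    have "(h has_real_derivative ((2 * \<sigma> q * (fst q - snd q)) * Dn s - \<sigma> (gam x0 y0 s) * (2 * Dn s * (fst q - snd q))) / (Dn s * Dn s)) (at s)"
      unfolding h_def[abs_def] by (rule DERIV_divide[OF d1 d2 Dnz])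
    moreover have "(2 * \<sigma> q * (fst q - snd q)) * Dn s - \<sigma> (gam x0 y0 s) * (2 * Dn s * (fst q - snd q)) = 0"
      unfolding q_def by (simp add: algebra_simps)
    ultimately show ?thesis by simp
  qed
  have const: "h t = h 0"
  proof (cases "t \<ge> 0")
    case True
    have "\<And>x. 0 \<le> x \<Longrightarrow> x \<le> t \<Longrightarrow> (h has_derivative (\<lambda>h. 0 * h)) (at x within {0..t})"
    proof -
      fix x assume "0 \<le> x" "x \<le> t"
      then have "x \<in> {a..b}" using t ab by auto
      then have "(h has_derivative (*) 0) (at x)" using key[of x] unfolding has_field_derivative_def by blast
      then show "(h has_derivative (\<lambda>h. 0 * h)) (at x within {0..t})" by (rule has_derivative_at_withinI)
    qed
    from mvt_very_simple[of 0 t h "\<lambda>x h. 0 * h", OF True this] show ?thesis by simp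
  next
    case False
    then have tl: "t \<le> 0" by simp
    have "\<And>x. t \<le> x \<Longrightarrow> x \<le> 0 \<Longrightarrow> (h has_derivative (\<lambda>h. 0 * h)) (at x within {t..0})"
    proof -
      fix x assume "t \<le> x" "x \<le> 0"
      then have "x \<in> {a..b}" using t ab by auto
      then have "(h has_derivative (*) 0) (at x)" using key[of x] unfolding has_field_derivative_def by blast
      then show "(h has_derivative (\<lambda>h. 0 * h)) (at x within {t..0})" by (rule has_derivative_at_withinI)
    qed
    from mvt_very_simple[of t 0 h "\<lambda>x h. 0 * h", OF tl this] show ?thesis by simp
  qed
  have "Dn t \<noteq> 0" unfolding Dn_def using nz[OF t] by simp
  then have "\<sigma> (gam x0 y0 t) = h t * Dn t" unfolding h_def by simp
  also have "\<dots> = \<sigma> (x0, y0) * Dn t" using const unfolding h_def Dn_def gam_def by simp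
  finally show ?thesis unfolding Dn_def .
qed


lemma vd_fst: "(g has_vector_derivative v) F \<Longrightarrow> ((\<lambda>t. fst (g t)) has_real_derivative fst v) F"
  unfolding has_vector_derivative_def has_field_derivative_def
proof -
  assume "(g has_derivative (\<lambda>x. x *\<^sub>R v)) F"
  from has_derivative_fst[OF this] have "((\<lambda>t. fst (g t)) has_derivative (\<lambda>x. x * fst v)) F" by simp
  moreover have "(\<lambda>x. x * fst v) = (*) (fst v)" by (auto simp: fun_eq_iff mult.commute)
  ultimately show "((\<lambda>t. fst (g t)) has_derivative (*) (fst v)) F" by simp
qed

lemma vd_snd: "(g has_vector_derivative v) F \<Longrightarrow> ((\<lambda>t. snd (g t)) has_real_derivative snd v) F"
  unfolding has_vector_derivative_def has_field_derivative_def
proof -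
  assume "(g has_derivative (\<lambda>x. x *\<^sub>R v)) F"
  from has_derivative_snd[OF this] have "((\<lambda>t. snd (g t)) has_derivative (\<lambda>x. x * snd v)) F" by simp
  moreover have "(\<lambda>x. x * snd v) = (*) (snd v)" by (auto simp: fun_eq_iff mult.commute)
  ultimately show "((\<lambda>t. snd (g t)) has_derivative (*) (snd v)) F" by simp
qed

lemma gam0[simp]: "gam x0 y0 0 = (x0, y0)" by (simp add: gam_def)

lemma pos_stable_1: "pos_stable ({0<..<1} \<times> {-1<..<0}) grad_u (0,0)"
  unfolding pos_stable_def
proof (rule exI[of _ "{0..1/2::real} \<times> {-1/2..0::real}"], intro conjI)
  let ?U = "{-1/2<..<1/2} \<times> {-1/2<..<1/2} :: (real \<times> real) set"
  show "compact ({0..1/2::real} \<times> {-1/2..0::real} :: (real \<times> real) set)" by (intro compact_Times compact_Icc)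
  show "{0..1/2::real} \<times> {-1/2..0::real} \<subseteq> closure ({0<..<1} \<times> {-1<..<0}) \<inter> square"
    by (auto simp: closure_Times square_def)
  show "\<exists>U. open U \<and> (0,0) \<in> U \<and> U \<inter> ({0<..<1} \<times> {-1<..<0}) \<subseteq> {0..1/2::real} \<times> {-1/2..0::real}"
    by (intro exI[of _ ?U]) (auto intro!: open_Times)
  show "\<forall>q\<in>{0..1/2::real} \<times> {-1/2..0::real}. grad_u q = 0 \<longrightarrow> q = (0,0)"
    by (auto simp: grad_u_def zero_prod_def)
  show "\<exists>V. open V \<and> (0,0) \<in> V \<and> V \<inter> ({0<..<1} \<times> {-1<..<0}) \<subseteq> {0..1/2::real} \<times> {-1/2..0::real} \<and>
           (\<forall>x\<in>V \<inter> ({0<..<1} \<times> {-1<..<0}). \<exists>\<gamma>. \<gamma> 0 = x \<and>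
              (\<forall>t\<ge>0. (\<gamma> has_vector_derivative grad_u (\<gamma> t)) (at t within {0..}) \<and> \<gamma> t \<in> {0..1/2::real} \<times> {-1/2..0::real}))"
  proof (intro exI[of _ ?U] conjI ballI)
    show "open ?U" by (intro open_Times) auto
    show "(0,0) \<in> ?U" by auto
    show "?U \<inter> ({0<..<1} \<times> {-1<..<0}) \<subseteq> {0..1/2::real} \<times> {-1/2..0::real}" by auto
    fix p assume p: "p \<in> ?U \<inter> ({0<..<1} \<times> {-1<..<0})"
    obtain x0 y0 where pe: "p = (x0, y0)" by fastforce
    have x0: "0 < x0" "x0 < 1/2" and y0: "-1/2 < y0" "y0 < 0" using p pe by auto
    show "\<exists>\<gamma>. \<gamma> 0 = p \<and> (\<forall>t\<ge>0. (\<gamma> has_vector_derivative grad_u (\<gamma> t)) (at t within {0..}) \<and> \<gamma> t \<in> {0..1/2::real} \<times> {-1/2..0::real})"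
    proof (intro exI[of _ "gam x0 y0"] conjI allI impI)
      show "gam x0 y0 0 = p" using pe by simp
      fix t :: real assume t: "t \<ge> 0"
      have d1: "1 \<le> 1 + x0 * t" using x0 t by simp
      have d2: "1 \<le> 1 - y0 * t" using y0 t by (simp add: mult_nonpos_nonneg)
      show "(gam x0 y0 has_vector_derivative grad_u (gam x0 y0 t)) (at t within {0..})"
        using d1 d2 by (intro has_vector_derivative_at_within[OF gam_deriv]) auto
      have "x0 / (1 + x0 * t) \<le> x0" using d1 x0 by (simp add: divide_le_eq mult_le_cancel_left1)
      moreover have "y0 \<le> y0 / (1 - y0 * t)" using d2 y0 by (simp add: le_divide_eq mult_le_cancel_left1)
      moreover have "0 \<le> x0 / (1 + x0 * t)" using d1 x0 by simp
      moreover have "y0 / (1 - y0 * t) \<le> 0" using d2 y0 by (simp add: divide_nonpos_pos)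
      ultimately show "gam x0 y0 t \<in> {0..1/2::real} \<times> {-1/2..0::real}" using x0 y0 unfolding gam_def mem_Times_iff fst_conv snd_conv atLeastAtMost_iff by linarith
    qed
  qed
qed


lemma neg_stable_2: "neg_stable ({-1<..<0} \<times> {0<..<1}) grad_u (0,0)"
  unfolding neg_stable_def
proof (rule exI[of _ "{-1/2..0::real} \<times> {0..1/2::real}"], intro conjI)
  let ?U = "{-1/2<..<1/2} \<times> {-1/2<..<1/2} :: (real \<times> real) set"
  show "compact ({-1/2..0::real} \<times> {0..1/2::real} :: (real \<times> real) set)" by (intro compact_Times compact_Icc)
  show "{-1/2..0::real} \<times> {0..1/2::real} \<subseteq> closure ({-1<..<0} \<times> {0<..<1}) \<inter> square"
    by (auto simp: closure_Times square_def)
  show "\<exists>U. open U \<and> (0,0) \<in> U \<and> U \<inter> ({-1<..<0} \<times> {0<..<1}) \<subseteq> {-1/2..0::real} \<times> {0..1/2::real}"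
    by (intro exI[of _ ?U]) (auto intro!: open_Times)
  show "\<forall>q\<in>{-1/2..0::real} \<times> {0..1/2::real}. grad_u q = 0 \<longrightarrow> q = (0,0)"
    by (auto simp: grad_u_def zero_prod_def)
  show "\<exists>V. open V \<and> (0,0) \<in> V \<and> V \<inter> ({-1<..<0} \<times> {0<..<1}) \<subseteq> {-1/2..0::real} \<times> {0..1/2::real} \<and>
           (\<forall>x\<in>V \<inter> ({-1<..<0} \<times> {0<..<1}). \<exists>\<gamma>. \<gamma> 0 = x \<and>
              (\<forall>t\<le>0. (\<gamma> has_vector_derivative grad_u (\<gamma> t)) (at t within {..0}) \<and> \<gamma> t \<in> {-1/2..0::real} \<times> {0..1/2::real}))"
  proof (intro exI[of _ ?U] conjI ballI)
    show "open ?U" by (intro open_Times) auto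
    show "(0,0) \<in> ?U" by auto
    show "?U \<inter> ({-1<..<0} \<times> {0<..<1}) \<subseteq> {-1/2..0::real} \<times> {0..1/2::real}" by auto
    fix p assume p: "p \<in> ?U \<inter> ({-1<..<0} \<times> {0<..<1})"
    obtain x0 y0 where pe: "p = (x0, y0)" by fastforce
    have x0: "-1/2 < x0" "x0 < 0" and y0: "0 < y0" "y0 < 1/2" using p pe by auto
    show "\<exists>\<gamma>. \<gamma> 0 = p \<and> (\<forall>t\<le>0. (\<gamma> has_vector_derivative grad_u (\<gamma> t)) (at t within {..0}) \<and> \<gamma> t \<in> {-1/2..0::real} \<times> {0..1/2::real})"
    proof (intro exI[of _ "gam x0 y0"] conjI allI impI)
      show "gam x0 y0 0 = p" using pe by simp
      fix t :: real assume t: "t \<le> 0"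
      have d1: "1 \<le> 1 + x0 * t" using x0 t by (simp add: mult_nonpos_nonpos)
      have d2: "1 \<le> 1 - y0 * t" using y0 t by (simp add: mult_nonneg_nonpos)
      show "(gam x0 y0 has_vector_derivative grad_u (gam x0 y0 t)) (at t within {..0})"
        using d1 d2 by (intro has_vector_derivative_at_within[OF gam_deriv]) auto
      have "x0 \<le> x0 / (1 + x0 * t)" using d1 x0 by (simp add: le_divide_eq mult_le_cancel_left1)
      moreover have "y0 / (1 - y0 * t) \<le> y0" using d2 y0 by (simp add: divide_le_eq mult_le_cancel_left1)
      moreover have "x0 / (1 + x0 * t) \<le> 0" using d1 x0 by (simp add: divide_nonpos_pos)
      moreover have "0 \<le> y0 / (1 - y0 * t)" using d2 y0 by simp
      ultimately show "gam x0 y0 t \<in> {-1/2..0::real} \<times> {0..1/2::real}" using x0 y0 unfolding gam_def mem_Times_iff fst_conv snd_conv atLeastAtMost_iff by linarith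
    qed
  qed
qed

lemma small_point:
  assumes "open V" "(0,0) \<in> V"
  obtains c :: real where "0 < c" "c < 1" "(c, c) \<in> V" "(-c, -c) \<in> V"
proof -
  obtain e where e: "e > 0" "\<And>y. dist y (0,0) < e \<Longrightarrow> y \<in> V"
    using assms open_dist by blast
  define c where "c = min (e/4) (1/2)"
  have c: "0 < c" "c < 1" "c \<le> e/4" using e unfolding c_def by auto
  have s2: "sqrt 2 < (2::real)"
    using real_sqrt_less_iff[of 2 4] by (simp add: real_sqrt_four)
  have "c * sqrt 2 < c * 2" using s2 c by (intro mult_strict_left_mono) auto
  then have cs: "c * sqrt 2 < e" using c by linarith
  have "sqrt (c^2 + c^2) < e"
    using c e cs by (intro real_sqrt_sum_squares_less) (auto simp: field_simps)
  then have "dist (c, c) (0,0) < e" "dist (-c, -c) (0,0) < e" by (auto simp: dist_Pair_Pair dist_real_def)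
  then show ?thesis using that c e by blast
qed

lemma not_pos_3: "\<not> pos_stable ({0<..<1} \<times> {0<..<1}) grad_u (0,0)"
proof
  assume "pos_stable ({0<..<1} \<times> {0<..<1}) grad_u (0,0)"
  then obtain K V where K: "K \<subseteq> closure ({0<..<1} \<times> {0<..<1}) \<inter> square" and V: "open V" "(0,0) \<in> V"
    and traj: "\<forall>x\<in>V \<inter> ({0<..<1} \<times> {0<..<1}). \<exists>\<gamma>. \<gamma> 0 = x \<and>
              (\<forall>t\<ge>0. (\<gamma> has_vector_derivative grad_u (\<gamma> t)) (at t within {0..}) \<and> \<gamma> t \<in> K)"
    unfolding pos_stable_def by blast
  obtain c where c: "0 < c" "c < 1" "(c, c) \<in> V" "(-c, -c) \<in> V" using small_point[OF V] by blast
  have "(c,c) \<in> V \<inter> ({0<..<1} \<times> {0<..<1})" using c by auto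
  then obtain \<gamma> where g0: "\<gamma> 0 = (c,c)" and g: "\<And>t. t \<ge> 0 \<Longrightarrow> (\<gamma> has_vector_derivative grad_u (\<gamma> t)) (at t within {0..}) \<and> \<gamma> t \<in> K"
    using traj by blast
  have "\<exists>t\<ge>0. snd (\<gamma> t) \<ge> 1"
  proof (rule grow_fwd)
    show "snd (\<gamma> 0) > 0" using g0 c by simp
    fix t :: real assume "t \<ge> 0"
    from vd_snd[OF g[OF this, THEN conjunct1]]
    show "((\<lambda>t. snd (\<gamma> t)) has_real_derivative (snd (\<gamma> t))^2) (at t within {0..})" by (simp add: grad_u_def)
  qed
  then obtain t where t: "t \<ge> 0" "snd (\<gamma> t) \<ge> 1" by blast
  have "\<gamma> t \<in> square" using g[OF t(1)] K by blast
  then show False using t by (auto simp: square_def mem_Times_iff)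
qed

lemma not_pos_4: "\<not> pos_stable ({-1<..<0} \<times> {-1<..<0}) grad_u (0,0)"
proof
  assume "pos_stable ({-1<..<0} \<times> {-1<..<0}) grad_u (0,0)"
  then obtain K V where K: "K \<subseteq> closure ({-1<..<0} \<times> {-1<..<0}) \<inter> square" and V: "open V" "(0,0) \<in> V"
    and traj: "\<forall>x\<in>V \<inter> ({-1<..<0} \<times> {-1<..<0}). \<exists>\<gamma>. \<gamma> 0 = x \<and>
              (\<forall>t\<ge>0. (\<gamma> has_vector_derivative grad_u (\<gamma> t)) (at t within {0..}) \<and> \<gamma> t \<in> K)"
    unfolding pos_stable_def by blast
  obtain c where c: "0 < c" "c < 1" "(c, c) \<in> V" "(-c, -c) \<in> V" using small_point[OF V] by blast
  have "(-c,-c) \<in> V \<inter> ({-1<..<0} \<times> {-1<..<0})" using c by auto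
  then obtain \<gamma> where g0: "\<gamma> 0 = (-c,-c)" and g: "\<And>t. t \<ge> 0 \<Longrightarrow> (\<gamma> has_vector_derivative grad_u (\<gamma> t)) (at t within {0..}) \<and> \<gamma> t \<in> K"
    using traj by blast
  have "\<exists>t\<ge>0. - fst (\<gamma> t) \<ge> 1"
  proof (rule grow_fwd)
    show "- fst (\<gamma> 0) > 0" using g0 c by simp
    fix t :: real assume "t \<ge> 0"
    from DERIV_minus[OF vd_fst[OF g[OF this, THEN conjunct1]]]
    show "((\<lambda>t. - fst (\<gamma> t)) has_real_derivative (- fst (\<gamma> t))^2) (at t within {0..})" by (simp add: grad_u_def)
  qed
  then obtain t where t: "t \<ge> 0" "- fst (\<gamma> t) \<ge> 1" by blast
  have "\<gamma> t \<in> square" using g[OF t(1)] K by blast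
  then show False using t by (auto simp: square_def mem_Times_iff)
qed

lemma not_neg_3: "\<not> neg_stable ({0<..<1} \<times> {0<..<1}) grad_u (0,0)"
proof
  assume "neg_stable ({0<..<1} \<times> {0<..<1}) grad_u (0,0)"
  then obtain K V where K: "K \<subseteq> closure ({0<..<1} \<times> {0<..<1}) \<inter> square" and V: "open V" "(0,0) \<in> V"
    and traj: "\<forall>x\<in>V \<inter> ({0<..<1} \<times> {0<..<1}). \<exists>\<gamma>. \<gamma> 0 = x \<and>
              (\<forall>t\<le>0. (\<gamma> has_vector_derivative grad_u (\<gamma> t)) (at t within {..0}) \<and> \<gamma> t \<in> K)"
    unfolding neg_stable_def by blast
  obtain c where c: "0 < c" "c < 1" "(c, c) \<in> V" "(-c, -c) \<in> V" using small_point[OF V] by blast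
  have "(c,c) \<in> V \<inter> ({0<..<1} \<times> {0<..<1})" using c by auto
  then obtain \<gamma> where g0: "\<gamma> 0 = (c,c)" and g: "\<And>t. t \<le> 0 \<Longrightarrow> (\<gamma> has_vector_derivative grad_u (\<gamma> t)) (at t within {..0}) \<and> \<gamma> t \<in> K"
    using traj by blast
  have "\<exists>t\<le>0. fst (\<gamma> t) \<ge> 1"
  proof (rule grow_bwd)
    show "fst (\<gamma> 0) > 0" using g0 c by simp
    fix t :: real assume "t \<le> 0"
    from vd_fst[OF g[OF this, THEN conjunct1]]
    show "((\<lambda>t. fst (\<gamma> t)) has_real_derivative (-((fst (\<gamma> t))^2))) (at t within {..0})" by (simp add: grad_u_def)
  qed
  then obtain t where t: "t \<le> 0" "fst (\<gamma> t) \<ge> 1" by blast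
  have "\<gamma> t \<in> square" using g[OF t(1)] K by blast
  then show False using t by (auto simp: square_def mem_Times_iff)
qed

lemma not_neg_4: "\<not> neg_stable ({-1<..<0} \<times> {-1<..<0}) grad_u (0,0)"
proof
  assume "neg_stable ({-1<..<0} \<times> {-1<..<0}) grad_u (0,0)"
  then obtain K V where K: "K \<subseteq> closure ({-1<..<0} \<times> {-1<..<0}) \<inter> square" and V: "open V" "(0,0) \<in> V"
    and traj: "\<forall>x\<in>V \<inter> ({-1<..<0} \<times> {-1<..<0}). \<exists>\<gamma>. \<gamma> 0 = x \<and>
              (\<forall>t\<le>0. (\<gamma> has_vector_derivative grad_u (\<gamma> t)) (at t within {..0}) \<and> \<gamma> t \<in> K)"
    unfolding neg_stable_def by blast
  obtain c where c: "0 < c" "c < 1" "(c, c) \<in> V" "(-c, -c) \<in> V" using small_point[OF V] by blast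
  have "(-c,-c) \<in> V \<inter> ({-1<..<0} \<times> {-1<..<0})" using c by auto
  then obtain \<gamma> where g0: "\<gamma> 0 = (-c,-c)" and g: "\<And>t. t \<le> 0 \<Longrightarrow> (\<gamma> has_vector_derivative grad_u (\<gamma> t)) (at t within {..0}) \<and> \<gamma> t \<in> K"
    using traj by blast
  have "\<exists>t\<le>0. - snd (\<gamma> t) \<ge> 1"
  proof (rule grow_bwd)
    show "- snd (\<gamma> 0) > 0" using g0 c by simp
    fix t :: real assume "t \<le> 0"
    from DERIV_minus[OF vd_snd[OF g[OF this, THEN conjunct1]]]
    show "((\<lambda>t. - snd (\<gamma> t)) has_real_derivative (-((- snd (\<gamma> t))^2))) (at t within {..0})" by (simp add: grad_u_def)
  qed
  then obtain t where t: "t \<le> 0" "- snd (\<gamma> t) \<ge> 1" by blast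
  have "\<gamma> t \<in> square" using g[OF t(1)] K by blast
  then show False using t by (auto simp: square_def mem_Times_iff)
qed


lemma flow_inv2:
  assumes pc: "pos_C1_Linf \<Omega> \<sigma>" and rw: "realizable_with \<Omega> \<sigma>"
    and nz: "\<And>s. s \<in> {a..b} \<Longrightarrow> 1 + x0 * s \<noteq> 0 \<and> 1 - y0 * s \<noteq> 0"
    and inO: "\<And>s. s \<in> {a..b} \<Longrightarrow> gam x0 y0 s \<in> \<Omega>"
    and ab: "a \<le> 0" "0 \<le> b" and t: "t \<in> {a..b}"
  shows "\<sigma> (gam x0 y0 t) = \<sigma> (x0, y0) * ((1 + x0 * t)^2 * (1 - y0 * t)^2)"
proof -
  obtain sx sy where ds: "\<And>q. q \<in> \<Omega> \<Longrightarrow> (\<sigma> has_derivative (\<lambda>h. sx q * fst h + sy q * snd h)) (at q)"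
    using pc unfolding pos_C1_Linf_def by blast
  show ?thesis
    by (rule flow_inv[OF ds _ nz inO ab t]) (use rw in \<open>auto simp: realizable_with_def\<close>)
qed

lemma pow4_ge: "1 \<le> (A::real) \<Longrightarrow> A \<le> A^2 * A^2"
proof -
  assume A: "1 \<le> A"
  have "1 \<le> A^3" using A by (rule one_le_power)
  then have "A * 1 \<le> A * A^3" using A by (intro mult_left_mono) auto
  also have "A * A^3 = A^2 * A^2" by (simp add: power_def)
  finally show ?thesis by simp
qed

lemma unb_contra:
  assumes "s = P * (A^2 * A^2)" "(P::real) > 0" "A = 1 + M / P" "\<bar>s\<bar> \<le> M"
  shows False
proof -
  have M: "M \<ge> 0" using assms(4) by linarith
  have A1: "1 \<le> A" using assms(2,3) M by simp
  have "P * A \<le> P * (A^2 * A^2)" using pow4_ge[OF A1] assms(2) by (intro mult_left_mono) auto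
  moreover have "P * A = P + M" using assms(2,3) by (simp add: field_simps)
  ultimately show False using assms(1,2,4) by linarith
qed

lemma nonreal_1: "\<not> (\<exists>\<sigma>. pos_C1_Linf ({0<..<1} \<times> {-1<..<0}) \<sigma> \<and> realizable_with ({0<..<1} \<times> {-1<..<0}) \<sigma>)"
proof
  assume "\<exists>\<sigma>. pos_C1_Linf ({0<..<1} \<times> {-1<..<0}) \<sigma> \<and> realizable_with ({0<..<1} \<times> {-1<..<0}) \<sigma>"
  then obtain \<sigma> where pc: "pos_C1_Linf ({0<..<1} \<times> {-1<..<0}) \<sigma>" and rw: "realizable_with ({0<..<1} \<times> {-1<..<0}) \<sigma>" by blast
  define P where "P = \<sigma> (1/2, -1/2)"
  have P: "P > 0" using pc unfolding pos_C1_Linf_def P_def by auto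
  have "bounded (\<sigma> ` ({0<..<1} \<times> {-1<..<0}))" using pc unfolding pos_C1_Linf_def by blast
  then obtain M where M0: "\<forall>x\<in>\<sigma> ` ({0<..<1} \<times> {-1<..<0}). norm x \<le> M" unfolding bounded_iff by blast
  have M: "\<bar>\<sigma> q\<bar> \<le> M" if "q \<in> {0<..<1} \<times> {-1<..<0}" for q using M0 that by auto
  have "\<bar>P\<bar> \<le> M" using M[of "(1/2,-1/2)"] unfolding P_def by auto
  define T where "T = 2 * M / P"
  have T: "T \<ge> 0" using P \<open>\<bar>P\<bar> \<le> M\<close> unfolding T_def by auto
  have path: "1 + 1/2 * s \<noteq> 0 \<and> 1 - (-1/2) * s \<noteq> 0" "gam (1/2) (-1/2) s \<in> {0<..<1} \<times> {-1<..<0}" if "s \<in> {0..T}" for s :: real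
  proof -
    have s: "0 \<le> s" using that by auto
    then have d: "0 < 1 + s/2" by simp
    show "1 + 1/2 * s \<noteq> 0 \<and> 1 - (-1/2) * s \<noteq> 0" using s by simp
    show "gam (1/2) (-1/2) s \<in> {0<..<1} \<times> {-1<..<0}" using d s by (simp add: gam_def field_simps)
  qed
  have "\<sigma> (gam (1/2) (-1/2) T) = P * ((1 + 1/2 * T)^2 * (1 - (-1/2) * T)^2)"
    unfolding P_def by (rule flow_inv2[OF pc rw path(1) path(2)]) (use T in auto)
  then have e: "\<sigma> (gam (1/2) (-1/2) T) = P * ((1 + M/P)^2 * (1 + M/P)^2)" unfolding T_def by simp
  have "\<bar>\<sigma> (gam (1/2) (-1/2) T)\<bar> \<le> M" using M path(2)[of T] T by auto
  then show False using unb_contra[OF e P refl] by blast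
qed

lemma nonreal_2: "\<not> (\<exists>\<sigma>. pos_C1_Linf ({-1<..<0} \<times> {0<..<1}) \<sigma> \<and> realizable_with ({-1<..<0} \<times> {0<..<1}) \<sigma>)"
proof
  assume "\<exists>\<sigma>. pos_C1_Linf ({-1<..<0} \<times> {0<..<1}) \<sigma> \<and> realizable_with ({-1<..<0} \<times> {0<..<1}) \<sigma>"
  then obtain \<sigma> where pc: "pos_C1_Linf ({-1<..<0} \<times> {0<..<1}) \<sigma>" and rw: "realizable_with ({-1<..<0} \<times> {0<..<1}) \<sigma>" by blast
  define P where "P = \<sigma> (-1/2, 1/2)"
  have P: "P > 0" using pc unfolding pos_C1_Linf_def P_def by auto
  have "bounded (\<sigma> ` ({-1<..<0} \<times> {0<..<1}))" using pc unfolding pos_C1_Linf_def by blast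
  then obtain M where M0: "\<forall>x\<in>\<sigma> ` ({-1<..<0} \<times> {0<..<1}). norm x \<le> M" unfolding bounded_iff by blast
  have M: "\<bar>\<sigma> q\<bar> \<le> M" if "q \<in> {-1<..<0} \<times> {0<..<1}" for q using M0 that by auto
  have "\<bar>P\<bar> \<le> M" using M[of "(-1/2,1/2)"] unfolding P_def by auto
  define T where "T = 2 * M / P"
  have T: "T \<ge> 0" using P \<open>\<bar>P\<bar> \<le> M\<close> unfolding T_def by auto
  have path: "1 + (-1/2) * s \<noteq> 0 \<and> 1 - 1/2 * s \<noteq> 0" "gam (-1/2) (1/2) s \<in> {-1<..<0} \<times> {0<..<1}" if "s \<in> {-T..0}" for s :: real
  proof -
    have s: "s \<le> 0" using that by auto
    then have d: "0 < 1 - s/2" by simp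
    show "1 + (-1/2) * s \<noteq> 0 \<and> 1 - 1/2 * s \<noteq> 0" using s by simp
    show "gam (-1/2) (1/2) s \<in> {-1<..<0} \<times> {0<..<1}" using d s by (simp add: gam_def field_simps)
  qed
  have "\<sigma> (gam (-1/2) (1/2) (-T)) = P * ((1 + (-1/2) * (-T))^2 * (1 - 1/2 * (-T))^2)"
    unfolding P_def by (rule flow_inv2[where a="-T" and b=0, OF pc rw path(1) path(2)]) (use T in auto)
  then have e: "\<sigma> (gam (-1/2) (1/2) (-T)) = P * ((1 + M/P)^2 * (1 + M/P)^2)" unfolding T_def by simp
  have "\<bar>\<sigma> (gam (-1/2) (1/2) (-T))\<bar> \<le> M" using M path(2)[of "-T"] T by auto
  then show False using unb_contra[OF e P refl] by blast
qed


definition sig0 :: "real \<times> real \<Rightarrow> real" where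
  "sig0 p = (fst p * snd p)^2 / (fst p + snd p)^4"
definition sx0 :: "real \<times> real \<Rightarrow> real" where
  "sx0 p = 2 * fst p * (snd p)^2 * (snd p - fst p) / (fst p + snd p)^5"
definition sy0 :: "real \<times> real \<Rightarrow> real" where
  "sy0 p = 2 * (fst p)^2 * snd p * (fst p - snd p) / (fst p + snd p)^5"

lemma alg:
  fixes S x y a b :: real
  assumes "S \<noteq> 0"
  shows "(2 * (x * b) + 2 * (a * y)) * (x * y) / S ^ 4 - (x * y)^2 * (inverse (S ^ 4) * ((4 * a + 4 * b) * S ^ 3) * inverse (S ^ 4))
     = 2*x*y^2*(S-2*x)/S^5 * a + 2*x^2*y*(S-2*y)/S^5 * b"
proof -
  have e: "inverse (S ^ 4) * ((4 * a + 4 * b) * S ^ 3) * inverse (S ^ 4) = (4*a+4*b) / S^5"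
    using assms by (simp add: field_simps eval_nat_numeral)
  show ?thesis unfolding e using assms by (simp add: field_simps eval_nat_numeral)
qed

lemma sig0_deriv:
  assumes "fst p + snd p \<noteq> 0"
  shows "(sig0 has_derivative (\<lambda>h. sx0 p * fst h + sy0 p * snd h)) (at p)"
proof -
  obtain x y where p: "p = (x, y)" by fastforce
  have s: "x + y \<noteq> 0" using assms p by simp
  have D: "(sig0 has_derivative (\<lambda>h. (2 * (x * snd h) + 2 * (fst h * y)) * (x * y) / (x + y) ^ 4 - (x * y)^2 * (inverse ((x + y) ^ 4) * ((4 * fst h + 4 * snd h) * (x + y) ^ 3) * inverse ((x + y) ^ 4)))) (at (x,y))"
    unfolding sig0_def[abs_def]
    by (rule derivative_eq_intros refl | simp add: s)+
  have "(\<lambda>h. (2 * (x * snd h) + 2 * (fst h * y)) * (x * y) / (x + y) ^ 4 - (x * y)^2 * (inverse ((x + y) ^ 4) * ((4 * fst h + 4 * snd h) * (x + y) ^ 3) * inverse ((x + y) ^ 4)))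
     = (\<lambda>h. sx0 (x,y) * fst h + sy0 (x,y) * snd h)"
  proof
    fix h :: "real \<times> real"
    have "(2 * (x * snd h) + 2 * (fst h * y)) * (x * y) / (x + y) ^ 4 - (x * y)^2 * (inverse ((x + y) ^ 4) * ((4 * fst h + 4 * snd h) * (x + y) ^ 3) * inverse ((x + y) ^ 4))
      = 2*x*y^2*((x+y)-2*x)/(x+y)^5 * fst h + 2*x^2*y*((x+y)-2*y)/(x+y)^5 * snd h"
      using alg[OF s] .
    then show "(2 * (x * snd h) + 2 * (fst h * y)) * (x * y) / (x + y) ^ 4 - (x * y)^2 * (inverse ((x + y) ^ 4) * ((4 * fst h + 4 * snd h) * (x + y) ^ 3) * inverse ((x + y) ^ 4))
      = sx0 (x,y) * fst h + sy0 (x,y) * snd h" by (simp add: sx0_def sy0_def)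
  qed
  with D have "(sig0 has_derivative (\<lambda>h. sx0 (x,y) * fst h + sy0 (x,y) * snd h)) (at (x,y))" by simp
  then show ?thesis unfolding p .
qed

lemma alg2:
  fixes S x y :: real
  assumes "S \<noteq> 0"
  shows "(x*y)^2 / S^4 * (-(2*x)) + (x*y)^2 / S^4 * (2*y) + 2*x*y^2*(y-x)/S^5 * (-(x^2)) + 2*x^2*y*(x-y)/S^5 * y^2
     = 2*x^2*y^2*(y-x)*(S - x - y)/S^5"
  using assms by (simp add: field_simps eval_nat_numeral)

lemma sig0_ok:
  assumes xy: "\<And>p. p \<in> \<Omega> \<Longrightarrow> fst p * snd p > 0"
  shows "pos_C1_Linf \<Omega> sig0 \<and> realizable_with \<Omega> sig0"
proof -
  have S: "fst p + snd p \<noteq> 0" if "p \<in> \<Omega>" for p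
  proof
    assume "fst p + snd p = 0"
    then have "snd p = - fst p" by linarith
    then have "fst p * snd p \<le> 0" by simp
    with xy[OF that] show False by linarith
  qed
  have pos: "sig0 p > 0" if "p \<in> \<Omega>" for p
    using xy[OF that] S[OF that] unfolding sig0_def by (intro divide_pos_pos) (auto simp: zero_less_power_eq)
  have bnd: "sig0 p \<le> 1" if "p \<in> \<Omega>" for p
  proof -
    define x y where "x = fst p" "y = snd p"
    have xy0: "x * y > 0" using xy[OF that] x_y_def by simp
    have "0 \<le> (x - y)^2" by simp
    then have "x * y \<le> (x + y)^2" using xy0 by (simp add: power2_eq_square algebra_simps)
    then have "(x * y)^2 \<le> ((x + y)^2)^2" using xy0 by (intro power_mono) auto
    then have "(x * y)^2 \<le> (x + y)^4" by simp
    moreover have "(x + y)^4 > 0" using S[OF that] x_y_def by (simp add: zero_less_power_eq)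
    ultimately show ?thesis unfolding sig0_def x_y_def[symmetric] by simp
  qed
  have pc: "pos_C1_Linf \<Omega> sig0"
    unfolding pos_C1_Linf_def
  proof (intro conjI ballI)
    show "\<And>p. p \<in> \<Omega> \<Longrightarrow> 0 < sig0 p" by (rule pos)
    have "continuous_on \<Omega> sx0" unfolding sx0_def
      by (intro continuous_intros) (use S in auto)
    moreover have "continuous_on \<Omega> sy0" unfolding sy0_def
      by (intro continuous_intros) (use S in auto)
    moreover have "\<forall>p \<in> \<Omega>. (sig0 has_derivative (\<lambda>h. sx0 p * fst h + sy0 p * snd h)) (at p)"
      using S sig0_deriv by blast
    ultimately show "\<exists>\<sigma>x \<sigma>y. continuous_on \<Omega> \<sigma>x \<and> continuous_on \<Omega> \<sigma>y \<and>
        (\<forall>p\<in>\<Omega>. (sig0 has_derivative (\<lambda>h. \<sigma>x p * fst h + \<sigma>y p * snd h)) (at p))" by blast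
    show "bounded (sig0 ` \<Omega>)" unfolding bounded_iff
      using pos bnd by (intro exI[of _ 1]) (auto simp: less_imp_le)
  qed
  have rw: "realizable_with \<Omega> sig0"
    unfolding realizable_with_def div_free_def
  proof
    fix p assume p: "p \<in> \<Omega>"
    define D where "D = (\<lambda>h. sig0 p *\<^sub>R (- (2 * fst p * fst h), 2 * snd p * snd h) + (sx0 p * fst h + sy0 p * snd h) *\<^sub>R grad_u p)"
    have "((\<lambda>q. sig0 q *\<^sub>R grad_u q) has_derivative D) (at p)"
      unfolding D_def by (rule has_derivative_scaleR[OF sig0_deriv[OF S[OF p]] grad_u_deriv])
    moreover have "fst (D (1,0)) + snd (D (0,1)) = 0"
    proof -
      obtain x y where pe: "p = (x, y)" by fastforce
      have "fst (D (1,0)) + snd (D (0,1)) = sig0 p * (-(2*x)) + sig0 p * (2*y) + sx0 p * (-(x^2)) + sy0 p * y^2"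
        unfolding D_def pe by (simp add: grad_u_def)
      also have "\<dots> = 2*x^2*y^2*(y-x)*((x+y) - x - y)/(x+y)^5"
        unfolding pe sig0_def sx0_def sy0_def fst_conv snd_conv
        by (rule alg2) (use S[OF p] pe in simp)
      finally show ?thesis by simp
    qed
    ultimately show "\<exists>D. ((\<lambda>q. sig0 q *\<^sub>R grad_u q) has_derivative D) (at p) \<and> fst (D (1,0)) + snd (D (0,1)) = 0"
      by blast
  qed
  show ?thesis using pc rw by blast
qed


lemma contra2:
  fixes s P A N M :: real
  assumes "s = P * (A^2 * (1/2)^2)" "P > 0" "P * N \<ge> 1" "N \<ge> 0" "M \<ge> 0" "A \<ge> 4 * (N+1) * (M+1)" "\<bar>s\<bar> \<le> M"
  shows False
proof -
  have "1 * 1 \<le> (N+1) * (M+1)" using assms(4,5) by (intro mult_mono) auto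
  then have A1: "A \<ge> 1" using assms(6) by linarith
  have "A \<le> A^2" using A1 by (simp add: power2_eq_square)
  then have i1: "P * A \<le> P * A^2" using assms(2) by (intro mult_left_mono) auto
  have i2: "P * (4 * (N+1) * (M+1)) \<le> P * A" using assms(2,6) by (intro mult_left_mono) auto
  have "M + 1 = 1 * (M+1)" by simp
  also have "\<dots> \<le> P * N * (M+1)" using assms(3,5) by (intro mult_right_mono) auto
  also have "\<dots> \<le> P * (N+1) * (M+1)" using assms(2,5) by (intro mult_right_mono) auto
  also have "\<dots> = P * (4 * (N+1) * (M+1)) / 4" by (simp add: algebra_simps)
  also have "\<dots> \<le> P * A / 4" using i2 by simp
  also have "\<dots> \<le> P * A^2 / 4" using i1 by simp
  also have "\<dots> = s" using assms(1) by (simp add: power2_eq_square)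
  finally have "M + 1 \<le> s" .
  then show False using assms(7) by linarith
qed

lemma nonreal_inv_3:
  "\<not> (\<exists>\<sigma>. pos_C1_Linf ({0<..<1} \<times> {0<..<1}) \<sigma> \<and> bounded ((\<lambda>p. 1 / \<sigma> p) ` ({0<..<1} \<times> {0<..<1})) \<and>
              realizable_with ({0<..<1} \<times> {0<..<1}) \<sigma>)"
proof
  let ?O = "{0<..<1} \<times> {0<..<1} :: (real \<times> real) set"
  assume "\<exists>\<sigma>. pos_C1_Linf ?O \<sigma> \<and> bounded ((\<lambda>p. 1 / \<sigma> p) ` ?O) \<and> realizable_with ?O \<sigma>"
  then obtain \<sigma> where pc: "pos_C1_Linf ?O \<sigma>" and bi: "bounded ((\<lambda>p. 1 / \<sigma> p) ` ?O)" and rw: "realizable_with ?O \<sigma>" by blast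
  have "bounded (\<sigma> ` ?O)" using pc unfolding pos_C1_Linf_def by blast
  then obtain M where M0: "\<forall>x\<in>\<sigma> ` ?O. norm x \<le> M" unfolding bounded_iff by blast
  have M: "\<bar>\<sigma> q\<bar> \<le> M" if "q \<in> ?O" for q using M0 that by auto
  obtain N where N0: "\<forall>x\<in>(\<lambda>p. 1 / \<sigma> p) ` ?O. norm x \<le> N" using bi unfolding bounded_iff by blast
  have N: "\<bar>1 / \<sigma> q\<bar> \<le> N" if "q \<in> ?O" for q using N0 that by auto
  have M0': "M \<ge> 0" using M[of "(1/2,1/2)"] by auto
  have N0': "N \<ge> 0" using order_trans[OF abs_ge_zero N[of "(1/2,1/2)"]] by auto
  define Q where "Q = (N+1) * (M+1)"
  have "1 * 1 \<le> (N+1) * (M+1)" using M0' N0' by (intro mult_mono) auto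
  then have Q: "1 \<le> Q" unfolding Q_def by simp
  define b where "b = 1 / (16 * Q)"
  have b: "0 < b" "b \<le> 1/16" using Q unfolding b_def by (auto simp: field_simps)
  define T where "T = 1 / (2 * b)"
  have T: "T \<ge> 0" "b * T = 1/2" "T / 2 = 4 * Q" using b Q unfolding T_def b_def by (auto simp: field_simps)
  define P where "P = \<sigma> (1/2, b)"
  have pin: "(1/2, b) \<in> ?O" using b by auto
  have P: "P > 0" using pc pin unfolding pos_C1_Linf_def P_def by blast
  have "1 / P \<le> N" using N[OF pin] P unfolding P_def by simp
  then have PN: "P * N \<ge> 1" using P by (simp add: field_simps)
  have path: "1 + 1/2 * s \<noteq> 0 \<and> 1 - b * s \<noteq> 0" "gam (1/2) b s \<in> ?O" if "s \<in> {0..T}" for s :: real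
  proof -
    have s: "0 \<le> s" "s \<le> T" using that by auto
    have bs: "b * s \<le> 1/2" using T(2) s b by (metis mult_left_mono less_imp_le)
    have bs0: "0 \<le> b * s" using b s by simp
    have d: "0 < 1 + s/2" using s by simp
    have d2: "1/2 \<le> 1 - b * s" using bs by simp
    show "1 + 1/2 * s \<noteq> 0 \<and> 1 - b * s \<noteq> 0" using d d2 by auto
    have "b / (1 - b * s) \<le> b / (1/2)" using d2 b by (intro divide_left_mono) auto
    then have "b / (1 - b * s) < 1" using b by simp
    moreover have "0 < b / (1 - b * s)" using d2 b by simp
    moreover have "(1/2) / (1 + 1/2 * s) < 1" using d s by (simp add: field_simps)
    moreover have "0 < (1/2) / (1 + 1/2 * s)" using d by simp
    ultimately show "gam (1/2) b s \<in> ?O" by (simp add: gam_def)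
  qed
  have "\<sigma> (gam (1/2) b T) = P * ((1 + 1/2 * T)^2 * (1 - b * T)^2)"
    unfolding P_def by (rule flow_inv2[where a=0 and b=T, OF pc rw path(1) path(2)]) (use T in auto)
  then have e: "\<sigma> (gam (1/2) b T) = P * ((1 + 1/2 * T)^2 * (1/2)^2)" using T(2) by simp
  have "\<bar>\<sigma> (gam (1/2) b T)\<bar> \<le> M" using M path(2)[of T] T by auto
  moreover have "1 + 1/2 * T \<ge> 4 * (N+1) * (M+1)"
  proof -
    have "4 * (N+1) * (M+1) = 4 * Q" unfolding Q_def by simp
    moreover have "1/2 * T = 4 * Q" using T(3) by simp
    ultimately show ?thesis by linarith
  qed
  ultimately show False using contra2[OF e P PN N0' M0'] by blast
qed

lemma nonreal_inv_4:
  "\<not> (\<exists>\<sigma>. pos_C1_Linf ({-1<..<0} \<times> {-1<..<0}) \<sigma> \<and> bounded ((\<lambda>p. 1 / \<sigma> p) ` ({-1<..<0} \<times> {-1<..<0})) \<and>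
              realizable_with ({-1<..<0} \<times> {-1<..<0}) \<sigma>)"
proof
  let ?O = "{-1<..<0} \<times> {-1<..<0} :: (real \<times> real) set"
  assume "\<exists>\<sigma>. pos_C1_Linf ?O \<sigma> \<and> bounded ((\<lambda>p. 1 / \<sigma> p) ` ?O) \<and> realizable_with ?O \<sigma>"
  then obtain \<sigma> where pc: "pos_C1_Linf ?O \<sigma>" and bi: "bounded ((\<lambda>p. 1 / \<sigma> p) ` ?O)" and rw: "realizable_with ?O \<sigma>" by blast
  have "bounded (\<sigma> ` ?O)" using pc unfolding pos_C1_Linf_def by blast
  then obtain M where M0: "\<forall>x\<in>\<sigma> ` ?O. norm x \<le> M" unfolding bounded_iff by blast
  have M: "\<bar>\<sigma> q\<bar> \<le> M" if "q \<in> ?O" for q using M0 that by auto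
  obtain N where N0: "\<forall>x\<in>(\<lambda>p. 1 / \<sigma> p) ` ?O. norm x \<le> N" using bi unfolding bounded_iff by blast
  have N: "\<bar>1 / \<sigma> q\<bar> \<le> N" if "q \<in> ?O" for q using N0 that by auto
  have M0': "M \<ge> 0" using M[of "(-1/2,-1/2)"] by auto
  have N0': "N \<ge> 0" using order_trans[OF abs_ge_zero N[of "(-1/2,-1/2)"]] by auto
  define Q where "Q = (N+1) * (M+1)"
  have "1 * 1 \<le> (N+1) * (M+1)" using M0' N0' by (intro mult_mono) auto
  then have Q: "1 \<le> Q" unfolding Q_def by simp
  define b where "b = 1 / (16 * Q)"
  have b: "0 < b" "b \<le> 1/16" using Q unfolding b_def by (auto simp: field_simps)
  define T where "T = 1 / (2 * b)"
  have T: "T \<ge> 0" "b * T = 1/2" "T / 2 = 4 * Q" using b Q unfolding T_def b_def by (auto simp: field_simps)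
  define P where "P = \<sigma> (-b, -1/2)"
  have pin: "(-b, -1/2) \<in> ?O" using b by auto
  have P: "P > 0" using pc pin unfolding pos_C1_Linf_def P_def by blast
  have "1 / P \<le> N" using N[OF pin] P unfolding P_def by simp
  then have PN: "P * N \<ge> 1" using P by (simp add: field_simps)
  have path: "1 + (-b) * s \<noteq> 0 \<and> 1 - (-1/2) * s \<noteq> 0" "gam (-b) (-1/2) s \<in> ?O" if "s \<in> {0..T}" for s :: real
  proof -
    have s: "0 \<le> s" "s \<le> T" using that by auto
    have bs: "b * s \<le> 1/2" using T(2) s b by (metis mult_left_mono less_imp_le)
    have d: "0 < 1 + s/2" using s by simp
    have d2: "1/2 \<le> 1 - b * s" using bs by simp
    show "1 + (-b) * s \<noteq> 0 \<and> 1 - (-1/2) * s \<noteq> 0" using d d2 by auto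
    have "b / (1 - b * s) \<le> b / (1/2)" using d2 b by (intro divide_left_mono) auto
    then have "b / (1 - b * s) < 1" using b by simp
    moreover have "0 < b / (1 - b * s)" using d2 b by simp
    moreover have "(1/2) / (1 + 1/2 * s) < 1" using d s by (simp add: field_simps)
    moreover have "0 < (1/2) / (1 + 1/2 * s)" using d by simp
    ultimately show "gam (-b) (-1/2) s \<in> ?O" by (simp add: gam_def)
  qed
  have "\<sigma> (gam (-b) (-1/2) T) = P * ((1 + (-b) * T)^2 * (1 - (-1/2) * T)^2)"
    unfolding P_def by (rule flow_inv2[where a=0 and b=T, OF pc rw path(1) path(2)]) (use T in auto)
  then have e: "\<sigma> (gam (-b) (-1/2) T) = P * ((1 + 1/2 * T)^2 * (1/2)^2)" using T(2) by (simp add: algebra_simps)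
  have "\<bar>\<sigma> (gam (-b) (-1/2) T)\<bar> \<le> M" using M path(2)[of T] T by auto
  moreover have "1 + 1/2 * T \<ge> 4 * (N+1) * (M+1)"
  proof -
    have "4 * (N+1) * (M+1) = 4 * Q" unfolding Q_def by simp
    moreover have "1/2 * T = 4 * Q" using T(3) by simp
    ultimately show ?thesis by linarith
  qed
  ultimately show False using contra2[OF e P PN N0' M0'] by blast
qed


theorem proposition4p1:
  shows
   "(pos_stable ({0<..<1} \<times> {-1<..<0}) grad_u (0,0) \<and>
     \<not> (\<exists>\<sigma>. pos_C1_Linf ({0<..<1} \<times> {-1<..<0}) \<sigma> \<and>
            realizable_with ({0<..<1} \<times> {-1<..<0}) \<sigma>)) \<and>
    (neg_stable ({-1<..<0} \<times> {0<..<1}) grad_u (0,0) \<and>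
     \<not> (\<exists>\<sigma>. pos_C1_Linf ({-1<..<0} \<times> {0<..<1}) \<sigma> \<and>
            realizable_with ({-1<..<0} \<times> {0<..<1}) \<sigma>)) \<and>
    (\<forall>\<Omega> \<in> {{0<..<1} \<times> {0<..<1}, {-1<..<0} \<times> {-1<..<0}}.
       \<not> pos_stable \<Omega> grad_u (0,0) \<and> \<not> neg_stable \<Omega> grad_u (0,0) \<and>
       (\<exists>\<sigma>0. pos_C1_Linf \<Omega> \<sigma>0 \<and> realizable_with \<Omega> \<sigma>0) \<and>
       \<not> (\<exists>\<sigma>. pos_C1_Linf \<Omega> \<sigma> \<and> bounded ((\<lambda>p. 1 / \<sigma> p) ` \<Omega>) \<and>
              realizable_with \<Omega> \<sigma>))"
proof -
  have e3: "\<exists>\<sigma>0. pos_C1_Linf ({0<..<1} \<times> {0<..<1}) \<sigma>0 \<and> realizable_with ({0<..<1} \<times> {0<..<1}) \<sigma>0"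
    using sig0_ok[of "{0<..<1} \<times> {0<..<1}"] by auto
  have e4: "\<exists>\<sigma>0. pos_C1_Linf ({-1<..<0} \<times> {-1<..<0}) \<sigma>0 \<and> realizable_with ({-1<..<0} \<times> {-1<..<0}) \<sigma>0"
    using sig0_ok[of "{-1<..<0} \<times> {-1<..<0}"] by (auto simp: mult_neg_neg)
  show ?thesis
    using pos_stable_1 nonreal_1 neg_stable_2 nonreal_2 not_pos_3 not_neg_3 e3 nonreal_inv_3
      not_pos_4 not_neg_4 e4 nonreal_inv_4 by blast
qed

end
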